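(* The classes PosLimSup and AsLimSup are closed under sum: for any two automata $A_1,A_2$ in PosLimSup (resp. AsLimSup) over the same alphabet $\Sigma$, there is an automaton $A$ in PosLimSup (resp. AsLimSup) over $\Sigma$ with $L_A(w)=L_{A_1}(w)+L_{A_2}(w)$ for all $w\in\Sigma^\omega$.
   Context: A probabilistic weighted automaton over a finite alphabet $\Sigma$ is a tuple $A=(Q,\rho_I,\Sigma,\delta,\gamma)$ where $Q$ is a finite set of states, $\rho_I$ is a probability distribution on $Q$, $\delta:Q\times\Sigma\to\mathcal D(Q)$ assigns to each state and letter a probability distribution on $Q$, and $\gamma:Q\times\Sigma\times Q\to\mathbb Q$ is a weight function. A run over an infinite word $w=\sigma_1\sigma_2\dots$ is a sequence $r=q_0\sigma_1q_1\sigma_2\dots$ with $\rho_I(q_0)>0$ and $\delta(q_i,\sigma_{i+1})(q_{i+1})>0$ for all $i$; its weight sequence is $\gamma(r)=v_0v_1\dots$ with $v_i=\gamma(q_i,\sigma_{i+1},q_{i+1})$. For each $w$, the probabilities of finite run prefixes induce a probability measure $\mathbb P^A$ on runs over $w$. With $\mathsf{LimSup}(v)=\limsup_n v_n$, PosLimSup automata define $L^{>0}_A(w)=\sup\{\eta\mid \mathbb P^A(\{r:\mathsf{LimSup}(\gamma(r))\ge\eta\})>0\}$ and AsLimSup automata define $L^{=1}_A(w)=\sup\{\eta\mid \mathbb P^A(\{r:\mathsf{LimSup}(\gamma(r))\ge\eta\})=1\}$. *)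

theory Defs
  imports "HOL-Probability.Probability"
begin

text \<open>Probabilistic weighted automata over a finite alphabet (the type 'a, with Sigma = UNIV).
  States are natural numbers; the state set is an explicit finite set of naturals.\<close>

record 'a pwa =
  states :: "nat set"
  init   :: "nat pmf"
  trans  :: "nat \<Rightarrow> 'a \<Rightarrow> nat pmf"
  weight :: "nat \<Rightarrow> 'a \<Rightarrow> nat \<Rightarrow> rat"

definition wf_pwa :: "('a::finite) pwa \<Rightarrow> bool" where
  "wf_pwa A \<longleftrightarrow> finite (states A) \<and> set_pmf (init A) \<subseteq> states A \<and>
     (\<forall>q\<in>states A. \<forall>\<sigma>. set_pmf (trans A q \<sigma>) \<subseteq> states A)"

definition seq_space :: "(nat \<Rightarrow> nat) measure" where
  "seq_space = PiM UNIV (\<lambda>_. count_space UNIV)"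

text \<open>Probability of the finite prefix q_0 sigma_1 q_1 ... sigma_n q_n over the word w
  (with w i = sigma_(i+1)).\<close>
definition prefix_prob :: "('a::finite) pwa \<Rightarrow> (nat \<Rightarrow> 'a) \<Rightarrow> nat \<Rightarrow> (nat \<Rightarrow> nat) \<Rightarrow> real" where
  "prefix_prob A w n p = pmf (init A) (p 0) * (\<Prod>i<n. pmf (trans A (p i) (w i)) (p (Suc i)))"

definition run_measure :: "('a::finite) pwa \<Rightarrow> (nat \<Rightarrow> 'a) \<Rightarrow> (nat \<Rightarrow> nat) measure" where
  "run_measure A w = (THE M. prob_space M \<and> sets M = sets seq_space \<and>
     (\<forall>n p. emeasure M {r \<in> space seq_space. \<forall>i\<le>n. r i = p i} = ennreal (prefix_prob A w n p)))"

text \<open>Weight sequence gamma(r) = v_0 v_1 ... with v_i = gamma(q_i, sigma_(i+1), q_(i+1)).\<close>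
definition wseq :: "('a::finite) pwa \<Rightarrow> (nat \<Rightarrow> 'a) \<Rightarrow> (nat \<Rightarrow> nat) \<Rightarrow> nat \<Rightarrow> real" where
  "wseq A w r i = of_rat (weight A (r i) (w i) (r (Suc i)))"

definition LimSup :: "(nat \<Rightarrow> real) \<Rightarrow> ereal" where
  "LimSup v = limsup (\<lambda>n. ereal (v n))"

definition ev_ge :: "('a::finite) pwa \<Rightarrow> (nat \<Rightarrow> 'a) \<Rightarrow> real \<Rightarrow> (nat \<Rightarrow> nat) set" where
  "ev_ge A w \<eta> = {r \<in> space seq_space. LimSup (wseq A w r) \<ge> ereal \<eta>}"

definition L_pos :: "('a::finite) pwa \<Rightarrow> (nat \<Rightarrow> 'a) \<Rightarrow> real" where
  "L_pos A w = Sup {\<eta>. measure (run_measure A w) (ev_ge A w \<eta>) > 0}"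

definition L_as :: "('a::finite) pwa \<Rightarrow> (nat \<Rightarrow> 'a) \<Rightarrow> real" where
  "L_as A w = Sup {\<eta>. measure (run_measure A w) (ev_ge A w \<eta>) = 1}"

end

theory Submission
  imports Defs
begin


definition step1 :: "rat \<times> rat \<Rightarrow> rat \<Rightarrow> rat \<Rightarrow> bool \<times> bool \<Rightarrow> bool \<times> bool" where
  "step1 xy a b f = (if (fst f \<or> fst xy \<le> a) \<and> (snd f \<or> snd xy \<le> b) then (False, False)
      else (fst f \<or> fst xy \<le> a, snd f \<or> snd xy \<le> b))"

definition done1 :: "rat \<times> rat \<Rightarrow> rat \<Rightarrow> rat \<Rightarrow> bool \<times> bool \<Rightarrow> bool" where
  "done1 xy a b f = ((fst f \<or> fst xy \<le> a) \<and> (snd f \<or> snd xy \<le> b))"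

lemma pairA:
  fixes a b :: "nat \<Rightarrow> rat" and f :: "nat \<Rightarrow> bool \<times> bool"
  assumes f: "\<And>n. f (Suc n) = step1 (x,y) (a n) (b n) (f n)"
    and ev: "eventually (\<lambda>n. a n \<le> la) sequentially" and lx: "la < x"
  shows "eventually (\<lambda>n. \<not> done1 (x,y) (a n) (b n) (f n)) sequentially"
proof -
  obtain N where N: "\<And>n. n \<ge> N \<Longrightarrow> a n \<le> la" using ev by (auto simp: eventually_sequentially)
  have nx: "\<And>n. n \<ge> N \<Longrightarrow> \<not> x \<le> a n" using N lx by (meson leD order.trans)
  show ?thesis
  proof (cases "\<exists>m\<ge>N. done1 (x,y) (a m) (b m) (f m)")
    case False
    then show ?thesis by (auto simp: eventually_sequentially)
  next
    case True
    then obtain m where m: "m \<ge> N" "done1 (x,y) (a m) (b m) (f m)" by auto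
    have "\<not> fst (f n)" if "n \<ge> Suc m" for n
      using that
    proof (induction n rule: dec_induct)
      case base
      then show ?case using m f[of m] by (simp add: step1_def done1_def)
    next
      case (step n)
      then show ?case using f[of n] nx[of n] m(1) by (simp add: step1_def)
    qed
    then have "\<forall>n\<ge>Suc m. \<not> done1 (x,y) (a n) (b n) (f n)"
      using nx m(1) by (auto simp: done1_def)
    then show ?thesis by (auto simp: eventually_sequentially)
  qed
qed

lemma pairB:
  fixes a b :: "nat \<Rightarrow> rat" and f :: "nat \<Rightarrow> bool \<times> bool"
  assumes f: "\<And>n. f (Suc n) = step1 (x,y) (a n) (b n) (f n)"
    and ev: "eventually (\<lambda>n. b n \<le> lb) sequentially" and lx: "lb < y"
  shows "eventually (\<lambda>n. \<not> done1 (x,y) (a n) (b n) (f n)) sequentially"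
proof -
  obtain N where N: "\<And>n. n \<ge> N \<Longrightarrow> b n \<le> lb" using ev by (auto simp: eventually_sequentially)
  have nx: "\<And>n. n \<ge> N \<Longrightarrow> \<not> y \<le> b n" using N lx by (meson leD order.trans)
  show ?thesis
  proof (cases "\<exists>m\<ge>N. done1 (x,y) (a m) (b m) (f m)")
    case False
    then show ?thesis by (auto simp: eventually_sequentially)
  next
    case True
    then obtain m where m: "m \<ge> N" "done1 (x,y) (a m) (b m) (f m)" by auto
    have "\<not> snd (f n)" if "n \<ge> Suc m" for n
      using that
    proof (induction n rule: dec_induct)
      case base
      then show ?case using m f[of m] by (simp add: step1_def done1_def)
    next
      case (step n)
      then show ?case using f[of n] nx[of n] m(1) by (simp add: step1_def)
    qed
    then have "\<forall>n\<ge>Suc m. \<not> done1 (x,y) (a n) (b n) (f n)"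
      using nx m(1) by (auto simp: done1_def)
    then show ?thesis by (auto simp: eventually_sequentially)
  qed
qed

lemma pairC:
  fixes a b :: "nat \<Rightarrow> rat" and f :: "nat \<Rightarrow> bool \<times> bool"
  assumes f: "\<And>n. f (Suc n) = step1 (x,y) (a n) (b n) (f n)"
    and fa: "frequently (\<lambda>n. x \<le> a n) sequentially"
    and fb: "frequently (\<lambda>n. y \<le> b n) sequentially"
  shows "frequently (\<lambda>n. done1 (x,y) (a n) (b n) (f n)) sequentially"
  unfolding frequently_sequentially
proof (rule allI, rule ccontr)
  fix N assume "\<not> (\<exists>n\<ge>N. done1 (x, y) (a n) (b n) (f n))"
  then have nd: "\<And>n. n \<ge> N \<Longrightarrow> \<not> done1 (x, y) (a n) (b n) (f n)" by auto
  obtain n1 where n1: "n1 \<ge> N" "x \<le> a n1" using fa by (auto simp: frequently_sequentially)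
  have st: "fst (f n)" if "n \<ge> Suc n1" for n
    using that
  proof (induction n rule: dec_induct)
    case base
    then show ?case using n1 nd[of n1] f[of n1] by (simp add: step1_def done1_def)
  next
    case (step n)
    then show ?case using nd[of n] f[of n] n1 by (simp add: step1_def done1_def)
  qed
  obtain n2 where n2: "n2 \<ge> Suc n1" "y \<le> b n2" using fb by (auto simp: frequently_sequentially)
  have "done1 (x, y) (a n2) (b n2) (f n2)" using st[OF n2(1)] n2 by (simp add: done1_def)
  then show False using nd[of n2] n1 n2 by auto
qed



definition upd :: "(rat \<times> rat) list \<Rightarrow> rat \<Rightarrow> (bool \<times> bool) list \<times> rat \<Rightarrow> rat \<Rightarrow> rat \<Rightarrow> (bool \<times> bool) list \<times> rat" where
  "upd PL m0 s a b = (map (\<lambda>k. step1 (PL!k) a b (fst s ! k)) [0..<length PL],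
     Max (insert m0 ((\<lambda>k. fst (PL!k) + snd (PL!k)) ` {k. k < length PL \<and> done1 (PL!k) a b (fst s ! k)})))"

lemma pathwise:
  fixes a b :: "nat \<Rightarrow> rat"
  assumes S: "\<And>n. S (Suc n) = upd PL m0 (S n) (a n) (b n)"
    and ea: "eventually (\<lambda>n. a n \<le> la) sequentially" and fa: "frequently (\<lambda>n. la \<le> a n) sequentially"
    and eb: "eventually (\<lambda>n. b n \<le> lb) sequentially" and fb: "frequently (\<lambda>n. lb \<le> b n) sequentially"
    and mem: "(la, lb) \<in> set PL" and m0: "m0 \<le> la + lb"
  shows "eventually (\<lambda>n. snd (S (Suc n)) \<le> la + lb) sequentially \<and>
         frequently (\<lambda>n. la + lb \<le> snd (S (Suc n))) sequentially"
proof -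
  define f where "f k n = fst (S n) ! k" for k n
  have fS: "f k (Suc n) = step1 (PL!k) (a n) (b n) (f k n)" if "k < length PL" for k n
    using that by (simp add: f_def S upd_def)
  have bad: "eventually (\<lambda>n. \<not> done1 (PL!k) (a n) (b n) (f k n)) sequentially"
    if k: "k < length PL" and nk: "\<not> (fst (PL!k) \<le> la \<and> snd (PL!k) \<le> lb)" for k
  proof -
    obtain x y where xy: "PL!k = (x,y)" by fastforce
    have fk: "\<And>n. f k (Suc n) = step1 (x,y) (a n) (b n) (f k n)" using fS[OF k] xy by simp
    show ?thesis
    proof (cases "la < x")
      case True
      from pairA[OF fk ea True] show ?thesis using xy by simp
    next
      case False
      then have "lb < y" using nk xy by auto
      from pairB[OF fk eb this] show ?thesis using xy by simp
    qed
  qed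
  let ?B = "{k. k < length PL \<and> \<not> (fst (PL!k) \<le> la \<and> snd (PL!k) \<le> lb)}"
  have "eventually (\<lambda>n. \<forall>k\<in>?B. \<not> done1 (PL!k) (a n) (b n) (f k n)) sequentially"
    by (rule eventually_ball_finite) (auto intro: bad)
  then have e1: "eventually (\<lambda>n. snd (S (Suc n)) \<le> la + lb) sequentially"
  proof (rule eventually_mono)
    fix n assume h: "\<forall>k\<in>?B. \<not> done1 (PL!k) (a n) (b n) (f k n)"
    have "snd (S (Suc n)) = Max (insert m0 ((\<lambda>k. fst (PL!k) + snd (PL!k)) ` {k. k < length PL \<and> done1 (PL!k) (a n) (b n) (f k n)}))"
      by (simp add: S upd_def f_def)
    also have "\<dots> \<le> la + lb"
      using h m0 by (subst Max_le_iff) (auto intro: add_mono)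
    finally show "snd (S (Suc n)) \<le> la + lb" .
  qed
  obtain k0 where k0: "k0 < length PL" "PL!k0 = (la,lb)" using mem by (auto simp: in_set_conv_nth)
  have "frequently (\<lambda>n. done1 (la,lb) (a n) (b n) (f k0 n)) sequentially"
    by (rule pairC) (use fS[OF k0(1)] k0 fa fb in auto)
  then have e2: "frequently (\<lambda>n. la + lb \<le> snd (S (Suc n))) sequentially"
  proof (rule frequently_elim1)
    fix n assume h: "done1 (la,lb) (a n) (b n) (f k0 n)"
    have "la + lb \<le> Max (insert m0 ((\<lambda>k. fst (PL!k) + snd (PL!k)) ` {k. k < length PL \<and> done1 (PL!k) (a n) (b n) (f k n)}))"
      using h k0 by (intro Max_ge) force+
    also have "\<dots> = snd (S (Suc n))"
      by (simp add: S upd_def f_def)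
    finally show "la + lb \<le> snd (S (Suc n))" .
  qed
  from e1 e2 show ?thesis by simp
qed

lemma finite_vals_io:
  fixes a :: "nat \<Rightarrow> rat"
  assumes V: "finite V" and a: "\<And>n. a n \<in> V"
  shows "\<exists>l\<in>V. eventually (\<lambda>n. a n \<le> l) sequentially \<and> frequently (\<lambda>n. a n = l) sequentially"
proof -
  define T where "T = {x\<in>V. frequently (\<lambda>n. a n = x) sequentially}"
  have "T \<noteq> {}"
  proof
    assume "T = {}"
    then have "\<forall>x\<in>V. eventually (\<lambda>n. a n \<noteq> x) sequentially"
      by (auto simp: T_def not_frequently)
    then have "eventually (\<lambda>n. \<forall>x\<in>V. a n \<noteq> x) sequentially"
      using V by (rule eventually_ball_finite[rotated])
    then obtain n where "\<forall>x\<in>V. a n \<noteq> x" by (auto simp: eventually_sequentially)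
    then show False using a by auto
  qed
  have fT: "finite T" using V by (auto simp: T_def)
  define l where "l = Max T"
  have lT: "l \<in> T" using fT \<open>T \<noteq> {}\<close> by (simp add: l_def)
  have "\<forall>x\<in>{x\<in>V. l < x}. eventually (\<lambda>n. a n \<noteq> x) sequentially"
  proof
    fix x assume x: "x \<in> {x\<in>V. l < x}"
    then have "x \<notin> T" using fT l_def by (auto dest: Max_ge)
    then show "eventually (\<lambda>n. a n \<noteq> x) sequentially" using x by (auto simp: T_def not_frequently)
  qed
  then have "eventually (\<lambda>n. \<forall>x\<in>{x\<in>V. l < x}. a n \<noteq> x) sequentially"
    using V by (intro eventually_ball_finite) auto
  then have "eventually (\<lambda>n. a n \<le> l) sequentially"
    by (rule eventually_mono) (use a in \<open>force simp: not_le\<close>)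
  then show ?thesis using lT by (auto simp: T_def)
qed

lemma LimSup_eq:
  fixes v :: "nat \<Rightarrow> real"
  assumes "eventually (\<lambda>n. v n \<le> C) sequentially" "frequently (\<lambda>n. C \<le> v n) sequentially"
  shows "LimSup v = ereal C"
proof (rule antisym)
  show "LimSup v \<le> ereal C" unfolding LimSup_def
    by (rule Limsup_bounded) (use assms(1) in \<open>auto elim: eventually_mono\<close>)
  show "ereal C \<le> LimSup v" unfolding LimSup_def limsup_INF_SUP
  proof (rule INF_greatest)
    fix N :: nat
    obtain n where "n \<ge> N" "C \<le> v n" using assms(2) by (auto simp: frequently_sequentially)
    then show "ereal C \<le> (SUP m\<in>{N..}. ereal (v m))" by (intro SUP_upper2[of n]) auto
  qed
qed



definition K :: "('a::finite) pwa \<Rightarrow> (nat \<Rightarrow> 'a) \<Rightarrow> nat \<times> nat \<Rightarrow> nat pmf" where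
  "K B w iq = (case iq of (0, q) \<Rightarrow> init B | (Suc i, q) \<Rightarrow> trans B q (w i))"

definition Om :: "('a::finite) pwa \<Rightarrow> (nat \<Rightarrow> 'a) \<Rightarrow> (nat \<times> nat \<Rightarrow> nat) measure" where
  "Om B w = PiM UNIV (\<lambda>iq. measure_pmf (K B w iq))"

fun runf :: "(nat \<times> nat \<Rightarrow> nat) \<Rightarrow> nat \<Rightarrow> nat" where
  "runf \<omega> 0 = \<omega> (0,0)"
| "runf \<omega> (Suc i) = \<omega> (Suc i, runf \<omega> i)"

lemma space_Om[simp]: "space (Om B w) = UNIV"
  by (simp add: Om_def space_PiM)

lemma space_seq[simp]: "space seq_space = UNIV"
  by (simp add: seq_space_def space_PiM)

lemma prob_Om: "prob_space (Om B w)"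
  unfolding Om_def by (rule prob_space_PiM) (simp add: prob_space_measure_pmf)

lemma meas_runf_i: "(\<lambda>\<omega>. runf \<omega> i) \<in> measurable (Om B w) (count_space UNIV)"
proof (induction i)
  case 0
  then show ?case unfolding Om_def runf.simps
    by measurable
next
  case (Suc i)
  have "(\<lambda>\<omega>. (\<lambda>q \<omega>. \<omega> (Suc i, q)) (runf \<omega> i) \<omega>) \<in> measurable (Om B w) (count_space UNIV)"
  proof (rule measurable_compose_countable'[OF _ Suc])
    fix q :: nat
    show "(\<lambda>\<omega>. \<omega> (Suc i, q)) \<in> measurable (Om B w) (count_space UNIV)"
      unfolding Om_def
      by measurable
  qed simp
  then show ?case by simp
qed

lemma meas_runf: "runf \<in> measurable (Om B w) seq_space"
proof -
  have "(\<lambda>\<omega> i. runf \<omega> i) \<in> measurable (Om B w) seq_space"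
    unfolding seq_space_def by (rule measurable_PiM_single') (auto intro: meas_runf_i)
  then show ?thesis by simp
qed

lemma cyl_runf:
  "(\<forall>i\<le>n. runf \<omega> i = p i) \<longleftrightarrow> (\<forall>j\<in>insert (0,0) ((\<lambda>i. (Suc i, p i)) ` {..<n}). \<omega> j \<in> {p (fst j)})"
proof (induction n)
  case 0
  then show ?case by simp
next
  case (Suc n)
  have "(\<forall>i\<le>Suc n. runf \<omega> i = p i) \<longleftrightarrow> (\<forall>i\<le>n. runf \<omega> i = p i) \<and> runf \<omega> (Suc n) = p (Suc n)"
    by (auto simp: le_Suc_eq)
  also have "\<dots> \<longleftrightarrow> (\<forall>i\<le>n. runf \<omega> i = p i) \<and> \<omega> (Suc n, p n) = p (Suc n)"
    by auto
  also have "\<dots> \<longleftrightarrow> (\<forall>j\<in>insert (0,0) ((\<lambda>i. (Suc i, p i)) ` {..<Suc n}). \<omega> j \<in> {p (fst j)})"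
    unfolding Suc by (auto simp: lessThan_Suc)
  finally show ?case .
qed

lemma prefix_prob_nonneg: "0 \<le> prefix_prob B w n p"
  by (simp add: prefix_prob_def prod_nonneg)

lemma emeasure_cyl_Om:
  "emeasure (Om B w) {\<omega> \<in> space (Om B w). \<forall>i\<le>n. runf \<omega> i = p i} = ennreal (prefix_prob B w n p)"
proof -
  interpret P: product_prob_space "\<lambda>iq. measure_pmf (K B w iq)" UNIV
    by unfold_locales
  let ?J = "insert (0,0) ((\<lambda>i. (Suc i, p i)) ` {..<n})"
  have "emeasure (Om B w) {\<omega> \<in> space (Om B w). \<forall>i\<le>n. runf \<omega> i = p i}
      = emeasure (Om B w) {\<omega> \<in> space (Om B w). \<forall>j\<in>?J. \<omega> j \<in> {p (fst j)}}"
    by (simp only: cyl_runf)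
  also have "\<dots> = (\<Prod>j\<in>?J. emeasure (measure_pmf (K B w j)) {p (fst j)})"
    unfolding Om_def by (rule P.emeasure_PiM_Collect) auto
  also have "\<dots> = (\<Prod>j\<in>?J. ennreal (pmf (K B w j) (p (fst j))))"
    by (simp add: emeasure_pmf_single)
  also have "\<dots> = ennreal (pmf (K B w (0,0)) (p 0)) * (\<Prod>j\<in>(\<lambda>i. (Suc i, p i)) ` {..<n}. ennreal (pmf (K B w j) (p (fst j))))"
    by (subst prod.insert) auto
  also have "(\<Prod>j\<in>(\<lambda>i. (Suc i, p i)) ` {..<n}. ennreal (pmf (K B w j) (p (fst j))))
      = (\<Prod>i<n. ennreal (pmf (trans B (p i) (w i)) (p (Suc i))))"
    by (subst prod.reindex) (auto simp: inj_on_def K_def)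
  also have "\<dots> = ennreal (\<Prod>i<n. pmf (trans B (p i) (w i)) (p (Suc i)))"
    by (simp add: prod_ennreal)
  finally show ?thesis
    by (simp add: prefix_prob_def K_def ennreal_mult')
qed

definition cylP :: "(nat \<Rightarrow> nat) measure \<Rightarrow> ('a::finite) pwa \<Rightarrow> (nat \<Rightarrow> 'a) \<Rightarrow> bool" where
  "cylP M B w \<longleftrightarrow> (\<forall>n p. emeasure M {r \<in> space seq_space. \<forall>i\<le>n. r i = p i} = ennreal (prefix_prob B w n p))"

lemma cyl_sets: "{r \<in> space seq_space. \<forall>i\<le>n. r i = p i} \<in> sets seq_space"
  unfolding seq_space_def by measurable

lemma cylP_distr: "cylP (distr (Om B w) seq_space runf) B w"
  unfolding cylP_def
proof (intro allI)
  fix n p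
  show "emeasure (distr (Om B w) seq_space runf) {r \<in> space seq_space. \<forall>i\<le>n. r i = p i} = ennreal (prefix_prob B w n p)"
    by (subst emeasure_distr[OF meas_runf cyl_sets]) (simp add: emeasure_cyl_Om[symmetric] vimage_def)
qed



lemma prod_emb_seq: "prod_emb UNIV (\<lambda>_. count_space UNIV) J (Pi\<^sub>E J A) = {r. \<forall>j\<in>J. (r::nat\<Rightarrow>nat) j \<in> A j}"
  using space_seq unfolding prod_emb_def seq_space_def by (simp add: restrict_PiE_iff vimage_def Pi_def) (simp only: Ball_def)

lemma emb_eq_UN:
  fixes J :: "nat set" and A :: "nat \<Rightarrow> nat set"
  assumes J: "J \<subseteq> {..n}"
  defines "A' \<equiv> \<lambda>i. if i \<in> J then A i else UNIV"
  shows "prod_emb UNIV (\<lambda>_. count_space UNIV) J (Pi\<^sub>E J A)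
       = (\<Union>p\<in>Pi\<^sub>E {..n} A'. {r \<in> space seq_space. \<forall>i\<le>n. r i = p i})"
  unfolding prod_emb_seq
proof (intro equalityI subsetI)
  fix r assume r: "r \<in> {r. \<forall>j\<in>J. r j \<in> A j}"
  have "restrict r {..n} \<in> Pi\<^sub>E {..n} A'" using r by (auto simp: A'_def restrict_PiE_iff)
  moreover have "r \<in> {s \<in> space seq_space. \<forall>i\<le>n. s i = restrict r {..n} i}" by simp
  ultimately show "r \<in> (\<Union>p\<in>Pi\<^sub>E {..n} A'. {r \<in> space seq_space. \<forall>i\<le>n. r i = p i})"
    by (rule UN_I[where B="\<lambda>p. {r \<in> space seq_space. \<forall>i\<le>n. r i = p i}"])
next
  fix r assume "r \<in> (\<Union>p\<in>Pi\<^sub>E {..n} A'. {r \<in> space seq_space. \<forall>i\<le>n. r i = p i})"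
  then obtain p where p: "p \<in> Pi\<^sub>E {..n} A'" "\<forall>i\<le>n. r i = p i" by blast
  have "\<forall>j\<in>J. r j \<in> A j"
  proof
    fix j assume j: "j \<in> J"
    then have "j \<le> n" using J by auto
    then have "r j = p j" "p j \<in> A' j" using p by (auto simp: PiE_iff)
    then show "r j \<in> A j" using j by (simp add: A'_def)
  qed
  then show "r \<in> {r. \<forall>j\<in>J. r j \<in> A j}" by simp
qed

lemma emeasure_emb_cylP:
  fixes J :: "nat set" and A :: "nat \<Rightarrow> nat set"
  assumes M: "sets M = sets seq_space" "cylP M B w" and J: "J \<subseteq> {..n}"
  defines "A' \<equiv> \<lambda>i. if i \<in> J then A i else UNIV"
  shows "emeasure M (prod_emb UNIV (\<lambda>_. count_space UNIV) J (Pi\<^sub>E J A))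
     = (\<integral>\<^sup>+p. ennreal (prefix_prob B w n p) \<partial>count_space (Pi\<^sub>E {..n} A'))"
proof -
  have "emeasure M (prod_emb UNIV (\<lambda>_. count_space UNIV) J (Pi\<^sub>E J A))
      = emeasure M (\<Union>p\<in>Pi\<^sub>E {..n} A'. {r \<in> space seq_space. \<forall>i\<le>n. r i = p i})"
    using emb_eq_UN[OF J, of A] by (simp add: A'_def)
  also have "\<dots> = (\<integral>\<^sup>+p. emeasure M {r \<in> space seq_space. \<forall>i\<le>n. r i = p i} \<partial>count_space (Pi\<^sub>E {..n} A'))"
  proof (rule emeasure_UN_countable)
    show "\<And>p. p \<in> Pi\<^sub>E {..n} A' \<Longrightarrow> {r \<in> space seq_space. \<forall>i\<le>n. r i = p i} \<in> sets M"
      using M(1) cyl_sets by auto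
    show "countable (Pi\<^sub>E {..n} A')" by (rule countable_PiE) auto
    show "disjoint_family_on (\<lambda>p. {r \<in> space seq_space. \<forall>i\<le>n. r i = p i}) (Pi\<^sub>E {..n} A')"
    unfolding disjoint_family_on_def
    proof (intro ballI impI)
      fix p q assume pq: "p \<in> Pi\<^sub>E {..n} A'" "q \<in> Pi\<^sub>E {..n} A'" "p \<noteq> q"
      then obtain i where i: "i \<le> n" "p i \<noteq> q i"
        by (metis PiE_ext atMost_iff)
      then show "{r \<in> space seq_space. \<forall>i\<le>n. r i = p i} \<inter> {r \<in> space seq_space. \<forall>i\<le>n. r i = q i} = {}"
        by auto
    qed
  qed
  also have "\<dots> = (\<integral>\<^sup>+p. ennreal (prefix_prob B w n p) \<partial>count_space (Pi\<^sub>E {..n} A'))"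
    using M(2) by (simp add: cylP_def)
  finally show ?thesis .
qed

lemma cylP_unique:
  assumes M: "prob_space M" "sets M = sets seq_space" "cylP M B w"
    and N: "prob_space N" "sets N = sets seq_space" "cylP N B w"
  shows "M = N"
proof (rule measure_eqI_PiM_infinite[where I=UNIV and M="\<lambda>_. count_space UNIV"])
  show "sets M = sets (PiM UNIV (\<lambda>_. count_space UNIV))" using M(2) by (simp add: seq_space_def)
  show "sets N = sets (PiM UNIV (\<lambda>_. count_space UNIV))" using N(2) by (simp add: seq_space_def)
  show "finite_measure M" using M(1) by (simp add: prob_space.finite_measure)
  fix A :: "nat \<Rightarrow> nat set" and J :: "nat set" assume J: "finite J"
  define n where "n = (if J = {} then 0 else Max J)"
  have Jn: "J \<subseteq> {..n}" using J by (auto simp: n_def)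
  show "emeasure M (prod_emb UNIV (\<lambda>_. count_space UNIV) J (Pi\<^sub>E J A)) = emeasure N (prod_emb UNIV (\<lambda>_. count_space UNIV) J (Pi\<^sub>E J A))"
    using emeasure_emb_cylP[OF M(2,3) Jn, of A] emeasure_emb_cylP[OF N(2,3) Jn, of A] by simp
qed

lemma run_measure_eq: "run_measure B w = distr (Om B w) seq_space runf"
  unfolding run_measure_def
proof (rule the_equality)
  show "prob_space (distr (Om B w) seq_space runf) \<and> sets (distr (Om B w) seq_space runf) = sets seq_space \<and>
    (\<forall>n p. emeasure (distr (Om B w) seq_space runf) {r \<in> space seq_space. \<forall>i\<le>n. r i = p i} = ennreal (prefix_prob B w n p))"
    using cylP_distr[of B w] prob_space.prob_space_distr[OF prob_Om meas_runf]
    by (simp add: cylP_def)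
  fix M assume "prob_space M \<and> sets M = sets seq_space \<and>
    (\<forall>n p. emeasure M {r \<in> space seq_space. \<forall>i\<le>n. r i = p i} = ennreal (prefix_prob B w n p))"
  then show "M = distr (Om B w) seq_space runf"
    using cylP_distr[of B w] prob_space.prob_space_distr[OF prob_Om meas_runf]
    by (intro cylP_unique[of M B w]) (auto simp: cylP_def)
qed



type_synonym fstate = "(bool \<times> bool) list \<times> rat"

definition Vals :: "('a::finite) pwa \<Rightarrow> rat set" where
  "Vals B = (\<lambda>(q,\<sigma>,q'). weight B q \<sigma> q') ` (states B \<times> UNIV \<times> states B)"

definition PLof :: "('a::finite) pwa \<Rightarrow> 'a pwa \<Rightarrow> (rat \<times> rat) list" where
  "PLof A1 A2 = (SOME l. set l = Vals A1 \<times> Vals A2)"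

definition m0of :: "('a::finite) pwa \<Rightarrow> 'a pwa \<Rightarrow> rat" where
  "m0of A1 A2 = Min (Vals A1) + Min (Vals A2)"

definition enc :: "nat \<times> nat \<times> fstate \<Rightarrow> nat" where "enc = to_nat"
definition dec :: "nat \<Rightarrow> nat \<times> nat \<times> fstate" where "dec = from_nat"

lemma dec_enc[simp]: "dec (enc x) = x" by (simp add: enc_def dec_def)
lemma enc_inj[simp]: "enc x = enc y \<longleftrightarrow> x = y" by (simp add: enc_def)

definition s0 :: "('a::finite) pwa \<Rightarrow> 'a pwa \<Rightarrow> fstate" where
  "s0 A1 A2 = (replicate (length (PLof A1 A2)) (False, False), m0of A1 A2)"

definition FSof :: "('a::finite) pwa \<Rightarrow> 'a pwa \<Rightarrow> fstate set" where
  "FSof A1 A2 = {fl. length fl = length (PLof A1 A2)} \<times> insert (m0of A1 A2) ((\<lambda>(x,y). x + y) ` set (PLof A1 A2))"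

definition sumA :: "('a::finite) pwa \<Rightarrow> 'a pwa \<Rightarrow> 'a pwa" where
  "sumA A1 A2 = \<lparr> states = enc ` (states A1 \<times> states A2 \<times> FSof A1 A2),
     init = map_pmf (\<lambda>(q1,q2). enc (q1, q2, s0 A1 A2)) (pair_pmf (init A1) (init A2)),
     trans = (\<lambda>s \<sigma>. case dec s of (q1, q2, f) \<Rightarrow>
        map_pmf (\<lambda>(q1',q2'). enc (q1', q2', upd (PLof A1 A2) (m0of A1 A2) f (weight A1 q1 \<sigma> q1') (weight A2 q2 \<sigma> q2')))
          (pair_pmf (trans A1 q1 \<sigma>) (trans A2 q2 \<sigma>))),
     weight = (\<lambda>s \<sigma> s'. snd (snd (snd (dec s')))) \<rparr>"

fun stf :: "('a::finite) pwa \<Rightarrow> 'a pwa \<Rightarrow> (nat \<Rightarrow> 'a) \<Rightarrow> (nat \<Rightarrow> nat) \<Rightarrow> (nat \<Rightarrow> nat) \<Rightarrow> nat \<Rightarrow> fstate" where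
  "stf A1 A2 w r1 r2 0 = s0 A1 A2"
| "stf A1 A2 w r1 r2 (Suc i) = upd (PLof A1 A2) (m0of A1 A2) (stf A1 A2 w r1 r2 i)
      (weight A1 (r1 i) (w i) (r1 (Suc i))) (weight A2 (r2 i) (w i) (r2 (Suc i)))"

definition jointf :: "('a::finite) pwa \<Rightarrow> 'a pwa \<Rightarrow> (nat \<Rightarrow> 'a) \<Rightarrow> (nat \<Rightarrow> nat) \<Rightarrow> (nat \<Rightarrow> nat) \<Rightarrow> nat \<Rightarrow> nat" where
  "jointf A1 A2 w r1 r2 i = enc (r1 i, r2 i, stf A1 A2 w r1 r2 i)"

lemma prefix_prob_0: "prefix_prob B w 0 p = pmf (init B) (p 0)"
  by (simp add: prefix_prob_def)

lemma prefix_prob_Suc: "prefix_prob B w (Suc n) p = prefix_prob B w n p * pmf (trans B (p n) (w n)) (p (Suc n))"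
  by (simp add: prefix_prob_def)

lemma stf_cong:
  assumes "\<forall>i\<le>n. r1 i = r1' i \<and> r2 i = r2' i" "m \<le> n"
  shows "stf A1 A2 w r1 r2 m = stf A1 A2 w r1' r2' m"
  using assms(2)
proof (induction m)
  case 0 then show ?case by simp
next
  case (Suc m) then show ?case using assms(1) by simp
qed

definition consP :: "('a::finite) pwa \<Rightarrow> 'a pwa \<Rightarrow> (nat \<Rightarrow> 'a) \<Rightarrow> nat \<Rightarrow> (nat \<Rightarrow> nat) \<Rightarrow> bool" where
  "consP A1 A2 w n p \<longleftrightarrow> (\<forall>i\<le>n. p i = jointf A1 A2 w (\<lambda>i. fst (dec (p i))) (\<lambda>i. fst (snd (dec (p i)))) i)"

lemma prefix_prob_sumA:
  "prefix_prob (sumA A1 A2) w n p =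
    (if consP A1 A2 w n p then prefix_prob A1 w n (\<lambda>i. fst (dec (p i))) * prefix_prob A2 w n (\<lambda>i. fst (snd (dec (p i)))) else 0)"
proof (induction n)
  case 0
  let ?f = "\<lambda>(q1,q2). enc (q1, q2, s0 A1 A2)"
  have inj: "inj ?f" by (auto simp: inj_def)
  show ?case
  proof (cases "consP A1 A2 w 0 p")
    case True
    then have e: "p 0 = ?f (fst (dec (p 0)), fst (snd (dec (p 0))))"
      by (simp add: consP_def jointf_def)
    have i: "init (sumA A1 A2) = map_pmf ?f (pair_pmf (init A1) (init A2))" by (simp add: sumA_def)
    have "pmf (init (sumA A1 A2)) (p 0) = pmf (pair_pmf (init A1) (init A2)) (fst (dec (p 0)), fst (snd (dec (p 0))))"
      by (subst e, unfold i pmf_map_inj'[OF inj]) (rule refl)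
    then show ?thesis using True by (simp add: prefix_prob_0 pmf_pair)
  next
    case False
    have "p 0 \<notin> ?f ` set_pmf (pair_pmf (init A1) (init A2))"
    proof
      assume "p 0 \<in> ?f ` set_pmf (pair_pmf (init A1) (init A2))"
      then obtain a b where "p 0 = enc (a, b, s0 A1 A2)" by auto
      then have "consP A1 A2 w 0 p" by (simp add: consP_def jointf_def)
      then show False using False by simp
    qed
    then show ?thesis using False by (simp add: prefix_prob_0 sumA_def pmf_map_outside)
  qed
next
  case (Suc n)
  define p1 where "p1 = (\<lambda>i. fst (dec (p i)))"
  define p2 where "p2 = (\<lambda>i. fst (snd (dec (p i))))"
  have cS: "consP A1 A2 w (Suc n) p \<longleftrightarrow> consP A1 A2 w n p \<and> p (Suc n) = jointf A1 A2 w p1 p2 (Suc n)"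
    by (auto simp: consP_def p1_def p2_def le_Suc_eq)
  show ?case
  proof (cases "consP A1 A2 w n p")
    case False
    then show ?thesis using Suc.IH cS by (simp add: prefix_prob_Suc)
  next
    case True
    then have "p n = jointf A1 A2 w p1 p2 n" by (simp add: consP_def p1_def p2_def)
    then have dn: "dec (p n) = (p1 n, p2 n, stf A1 A2 w p1 p2 n)"
      by (simp add: jointf_def)
    let ?f = "\<lambda>(q1',q2'). enc (q1', q2', upd (PLof A1 A2) (m0of A1 A2) (stf A1 A2 w p1 p2 n)
        (weight A1 (p1 n) (w n) q1') (weight A2 (p2 n) (w n) q2'))"
    have inj: "inj ?f" by (auto simp: inj_def)
    have tr: "trans (sumA A1 A2) (p n) (w n) = map_pmf ?f (pair_pmf (trans A1 (p1 n) (w n)) (trans A2 (p2 n) (w n)))"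
      by (simp add: sumA_def dn)
    have jf: "jointf A1 A2 w p1 p2 (Suc n) = ?f (p1 (Suc n), p2 (Suc n))"
      by (simp add: jointf_def)
    show ?thesis
    proof (cases "p (Suc n) = jointf A1 A2 w p1 p2 (Suc n)")
      case True2: True
      have "pmf (trans (sumA A1 A2) (p n) (w n)) (p (Suc n))
          = pmf (trans A1 (p1 n) (w n)) (p1 (Suc n)) * pmf (trans A2 (p2 n) (w n)) (p2 (Suc n))"
        unfolding tr True2 jf pmf_map_inj'[OF inj] pmf_pair ..
      then show ?thesis using Suc.IH cS True True2
        by (simp add: prefix_prob_Suc p1_def p2_def)
    next
      case False2: False
      have "p (Suc n) \<notin> ?f ` set_pmf (pair_pmf (trans A1 (p1 n) (w n)) (trans A2 (p2 n) (w n)))"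
      proof
        assume "p (Suc n) \<in> ?f ` set_pmf (pair_pmf (trans A1 (p1 n) (w n)) (trans A2 (p2 n) (w n)))"
        then obtain a b where ab: "p (Suc n) = ?f (a, b)" by auto
        then have "p1 (Suc n) = a" "p2 (Suc n) = b" by (simp_all add: p1_def p2_def)
        then have "p (Suc n) = jointf A1 A2 w p1 p2 (Suc n)" using ab jf by simp
        then show False using False2 by simp
      qed
      then have "pmf (trans (sumA A1 A2) (p n) (w n)) (p (Suc n)) = 0"
        unfolding tr by (rule pmf_map_outside)
      then show ?thesis using cS False2 by (simp add: prefix_prob_Suc)
    qed
  qed
qed



lemma jointf_cyl:
  "(\<forall>i\<le>n. jointf A1 A2 w R1 R2 i = p i) \<longleftrightarrow>
   consP A1 A2 w n p \<and> (\<forall>i\<le>n. R1 i = fst (dec (p i))) \<and> (\<forall>i\<le>n. R2 i = fst (snd (dec (p i))))"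
  (is "?L \<longleftrightarrow> ?R")
proof
  assume L: ?L
  have d: "dec (p i) = (R1 i, R2 i, stf A1 A2 w R1 R2 i)" if "i \<le> n" for i
    using L that by (metis dec_enc jointf_def)
  have r: "\<forall>i\<le>n. R1 i = fst (dec (p i)) \<and> R2 i = fst (snd (dec (p i)))" using d by simp
  have st: "stf A1 A2 w R1 R2 i = stf A1 A2 w (\<lambda>i. fst (dec (p i))) (\<lambda>i. fst (snd (dec (p i)))) i" if "i \<le> n" for i
    by (rule stf_cong[OF r that])
  have "consP A1 A2 w n p" unfolding consP_def
  proof (intro allI impI)
    fix i assume i: "i \<le> n"
    have "p i = jointf A1 A2 w R1 R2 i" using L i by simp
    also have "\<dots> = jointf A1 A2 w (\<lambda>i. fst (dec (p i))) (\<lambda>i. fst (snd (dec (p i)))) i"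
      unfolding jointf_def using r i st[OF i] by simp
    finally show "p i = jointf A1 A2 w (\<lambda>i. fst (dec (p i))) (\<lambda>i. fst (snd (dec (p i)))) i" .
  qed
  then show ?R using r by simp
next
  assume R: ?R
  then have r: "\<forall>i\<le>n. R1 i = fst (dec (p i)) \<and> R2 i = fst (snd (dec (p i)))" by simp
  show ?L
  proof (intro allI impI)
    fix i assume i: "i \<le> n"
    have "jointf A1 A2 w R1 R2 i = jointf A1 A2 w (\<lambda>i. fst (dec (p i))) (\<lambda>i. fst (snd (dec (p i)))) i"
      unfolding jointf_def using stf_cong[OF r i] r i by simp
    also have "\<dots> = p i" using R i by (simp add: consP_def)
    finally show "jointf A1 A2 w R1 R2 i = p i" .
  qed
qed

definition runA :: "('a::finite) pwa \<Rightarrow> 'a pwa \<Rightarrow> (nat \<Rightarrow> 'a) \<Rightarrow> (nat \<times> nat \<Rightarrow> nat) \<times> (nat \<times> nat \<Rightarrow> nat) \<Rightarrow> nat \<Rightarrow> nat" where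
  "runA A1 A2 w \<omega> = jointf A1 A2 w (runf (fst \<omega>)) (runf (snd \<omega>))"

lemma cyl_Om_sets: "{\<omega> \<in> space (Om B w). \<forall>i\<le>n. runf \<omega> i = p i} \<in> sets (Om B w)"
proof -
  have "runf -` {r \<in> space seq_space. \<forall>i\<le>n. r i = p i} \<inter> space (Om B w) \<in> sets (Om B w)"
    by (rule measurable_sets[OF meas_runf cyl_sets])
  also have "runf -` {r \<in> space seq_space. \<forall>i\<le>n. r i = p i} \<inter> space (Om B w) = {\<omega> \<in> space (Om B w). \<forall>i\<le>n. runf \<omega> i = p i}"
    by auto
  finally show ?thesis .
qed

lemma pair_cs:
  fixes f :: "'x \<Rightarrow> 'a::countable" and g :: "'x \<Rightarrow> 'b::countable"
  assumes f: "f \<in> measurable M (count_space UNIV)" and g: "g \<in> measurable M (count_space UNIV)"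
  shows "(\<lambda>x. (f x, g x)) \<in> measurable M (count_space UNIV)"
proof -
  have "(\<lambda>x. (\<lambda>a x. (a, g x)) (f x) x) \<in> measurable M (count_space UNIV)"
  proof (rule measurable_compose_countable'[OF _ f])
    fix a :: 'a
    show "(\<lambda>x. (a, g x)) \<in> measurable M (count_space UNIV)"
      by (rule measurable_compose[OF g]) simp
  qed simp
  then show ?thesis by simp
qed

lemma comp_cs:
  fixes f :: "'x \<Rightarrow> 'a::countable"
  assumes f: "f \<in> measurable M (count_space UNIV)" and N: "space N = UNIV"
  shows "(\<lambda>x. h (f x)) \<in> measurable M N"
  by (rule measurable_compose[OF f]) (simp add: N)

lemma meas_runf_fst: "(\<lambda>\<omega>. runf (fst \<omega>) i) \<in> measurable (Om A1 w \<Otimes>\<^sub>M Om A2 w) (count_space UNIV)"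
  by (rule measurable_compose[OF measurable_fst meas_runf_i])

lemma meas_runf_snd: "(\<lambda>\<omega>. runf (snd \<omega>) i) \<in> measurable (Om A1 w \<Otimes>\<^sub>M Om A2 w) (count_space UNIV)"
  by (rule measurable_compose[OF measurable_snd meas_runf_i])

lemma meas_s0: "(\<lambda>\<omega>. s0 A1 A2) \<in> measurable (Om A1 w \<Otimes>\<^sub>M Om A2 w) (count_space UNIV)"
  by (rule measurable_const) simp

lemma meas_T:
  "(\<lambda>\<omega>. (runf (fst \<omega>) i, runf (snd \<omega>) i, stf A1 A2 w (runf (fst \<omega>)) (runf (snd \<omega>)) i))
     \<in> measurable (Om A1 w \<Otimes>\<^sub>M Om A2 w) (count_space UNIV)"
proof (induction i)
  case 0
  have "(\<lambda>\<omega>. (runf (snd \<omega>) 0, s0 A1 A2)) \<in> measurable (Om A1 w \<Otimes>\<^sub>M Om A2 w) (count_space UNIV)"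
    by (rule pair_cs[OF meas_runf_snd meas_s0])
  then have "(\<lambda>\<omega>. (runf (fst \<omega>) 0, runf (snd \<omega>) 0, s0 A1 A2)) \<in> measurable (Om A1 w \<Otimes>\<^sub>M Om A2 w) (count_space UNIV)"
    by (rule pair_cs[OF meas_runf_fst])
  then show ?case by (simp only: stf.simps(1))
next
  case (Suc i)
  define G :: "(nat \<times> nat \<times> fstate) \<times> (nat \<times> nat) \<Rightarrow> nat \<times> nat \<times> fstate" where
    "G = (\<lambda>t. (fst (snd t), snd (snd t), upd (PLof A1 A2) (m0of A1 A2) (snd (snd (fst t)))
       (weight A1 (fst (fst t)) (w i) (fst (snd t))) (weight A2 (fst (snd (fst t))) (w i) (snd (snd t)))))"
  have h1: "(\<lambda>\<omega>. (runf (fst \<omega>) (Suc i), runf (snd \<omega>) (Suc i))) \<in> measurable (Om A1 w \<Otimes>\<^sub>M Om A2 w) (count_space UNIV)"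
    by (rule pair_cs[OF meas_runf_fst meas_runf_snd])
  have h2: "(\<lambda>\<omega>. ((runf (fst \<omega>) i, runf (snd \<omega>) i, stf A1 A2 w (runf (fst \<omega>)) (runf (snd \<omega>)) i),
               (runf (fst \<omega>) (Suc i), runf (snd \<omega>) (Suc i)))) \<in> measurable (Om A1 w \<Otimes>\<^sub>M Om A2 w) (count_space UNIV)"
    by (rule pair_cs[OF Suc.IH h1])
  have "(\<lambda>\<omega>. G ((runf (fst \<omega>) i, runf (snd \<omega>) i, stf A1 A2 w (runf (fst \<omega>)) (runf (snd \<omega>)) i),
               (runf (fst \<omega>) (Suc i), runf (snd \<omega>) (Suc i)))) \<in> measurable (Om A1 w \<Otimes>\<^sub>M Om A2 w) (count_space UNIV)"
    by (rule comp_cs[OF h2]) simp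
  then show ?case by (simp only: G_def fst_conv snd_conv stf.simps(2))
qed

lemma meas_runA: "runA A1 A2 w \<in> measurable (Om A1 w \<Otimes>\<^sub>M Om A2 w) seq_space"
proof -
  have "(\<lambda>\<omega> i. runA A1 A2 w \<omega> i) \<in> measurable (Om A1 w \<Otimes>\<^sub>M Om A2 w) seq_space"
    unfolding seq_space_def
  proof (rule measurable_PiM_single')
    fix i
    show "(\<lambda>\<omega>. runA A1 A2 w \<omega> i) \<in> measurable (Om A1 w \<Otimes>\<^sub>M Om A2 w) (count_space UNIV)"
      unfolding runA_def jointf_def by (rule comp_cs[OF meas_T]) simp
  qed simp
  then show ?thesis by simp
qed

lemma cylP_sumA: "cylP (distr (Om A1 w \<Otimes>\<^sub>M Om A2 w) seq_space (runA A1 A2 w)) (sumA A1 A2) w"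
  unfolding cylP_def
proof (intro allI)
  fix n :: nat and p :: "nat \<Rightarrow> nat"
  interpret O2: prob_space "Om A2 w" by (rule prob_Om)
  define p1 where "p1 = (\<lambda>i. fst (dec (p i)))"
  define p2 where "p2 = (\<lambda>i. fst (snd (dec (p i))))"
  let ?C1 = "{\<omega> \<in> space (Om A1 w). \<forall>i\<le>n. runf \<omega> i = p1 i}"
  let ?C2 = "{\<omega> \<in> space (Om A2 w). \<forall>i\<le>n. runf \<omega> i = p2 i}"
  have eq: "runA A1 A2 w -` {r \<in> space seq_space. \<forall>i\<le>n. r i = p i} \<inter> space (Om A1 w \<Otimes>\<^sub>M Om A2 w)
      = (if consP A1 A2 w n p then ?C1 \<times> ?C2 else {})"
  proof (rule set_eqI)
    fix \<omega> :: "(nat \<times> nat \<Rightarrow> nat) \<times> (nat \<times> nat \<Rightarrow> nat)"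
    have "\<omega> \<in> runA A1 A2 w -` {r \<in> space seq_space. \<forall>i\<le>n. r i = p i} \<inter> space (Om A1 w \<Otimes>\<^sub>M Om A2 w)
       \<longleftrightarrow> (\<forall>i\<le>n. jointf A1 A2 w (runf (fst \<omega>)) (runf (snd \<omega>)) i = p i)"
      by (simp add: runA_def space_pair_measure)
    also have "\<dots> \<longleftrightarrow> consP A1 A2 w n p \<and> (\<forall>i\<le>n. runf (fst \<omega>) i = p1 i) \<and> (\<forall>i\<le>n. runf (snd \<omega>) i = p2 i)"
      unfolding jointf_cyl p1_def p2_def ..
    also have "\<dots> \<longleftrightarrow> \<omega> \<in> (if consP A1 A2 w n p then ?C1 \<times> ?C2 else {})"
      by (cases \<omega>) (simp add: mem_Times_iff)
    finally show "\<omega> \<in> runA A1 A2 w -` {r \<in> space seq_space. \<forall>i\<le>n. r i = p i} \<inter> space (Om A1 w \<Otimes>\<^sub>M Om A2 w)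
       \<longleftrightarrow> \<omega> \<in> (if consP A1 A2 w n p then ?C1 \<times> ?C2 else {})" .
  qed
  have "emeasure (distr (Om A1 w \<Otimes>\<^sub>M Om A2 w) seq_space (runA A1 A2 w)) {r \<in> space seq_space. \<forall>i\<le>n. r i = p i}
     = emeasure (Om A1 w \<Otimes>\<^sub>M Om A2 w) (if consP A1 A2 w n p then ?C1 \<times> ?C2 else {})"
    unfolding emeasure_distr[OF meas_runA cyl_sets] eq by (rule refl)
  also have "\<dots> = ennreal (prefix_prob (sumA A1 A2) w n p)"
  proof (cases "consP A1 A2 w n p")
    case True
    have "emeasure (Om A1 w \<Otimes>\<^sub>M Om A2 w) (?C1 \<times> ?C2) = emeasure (Om A1 w) ?C1 * emeasure (Om A2 w) ?C2"
      by (rule O2.emeasure_pair_measure_Times) (rule cyl_Om_sets)+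
    also have "\<dots> = ennreal (prefix_prob A1 w n p1) * ennreal (prefix_prob A2 w n p2)"
      unfolding emeasure_cyl_Om by (rule refl)
    also have "\<dots> = ennreal (prefix_prob (sumA A1 A2) w n p)"
      using True by (simp add: prefix_prob_sumA p1_def p2_def ennreal_mult prefix_prob_nonneg)
    finally show ?thesis using True by simp
  next
    case False
    then show ?thesis by (simp add: prefix_prob_sumA)
  qed
  finally show "emeasure (distr (Om A1 w \<Otimes>\<^sub>M Om A2 w) seq_space (runA A1 A2 w)) {r \<in> space seq_space. \<forall>i\<le>n. r i = p i}
     = ennreal (prefix_prob (sumA A1 A2) w n p)" .
qed

lemma prob_OO: "prob_space (Om A1 w \<Otimes>\<^sub>M Om A2 w)"
  by (intro prob_space_pair prob_Om)

lemma run_measure_sumA: "run_measure (sumA A1 A2) w = distr (Om A1 w \<Otimes>\<^sub>M Om A2 w) seq_space (runA A1 A2 w)"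
  unfolding run_measure_def
proof (rule the_equality)
  show "prob_space (distr (Om A1 w \<Otimes>\<^sub>M Om A2 w) seq_space (runA A1 A2 w)) \<and> sets (distr (Om A1 w \<Otimes>\<^sub>M Om A2 w) seq_space (runA A1 A2 w)) = sets seq_space \<and>
    (\<forall>n p. emeasure (distr (Om A1 w \<Otimes>\<^sub>M Om A2 w) seq_space (runA A1 A2 w)) {r \<in> space seq_space. \<forall>i\<le>n. r i = p i} = ennreal (prefix_prob (sumA A1 A2) w n p))"
    using cylP_sumA[of A1 w A2] prob_space.prob_space_distr[OF prob_OO meas_runA]
    by (simp add: cylP_def)
  fix M assume "prob_space M \<and> sets M = sets seq_space \<and>
    (\<forall>n p. emeasure M {r \<in> space seq_space. \<forall>i\<le>n. r i = p i} = ennreal (prefix_prob (sumA A1 A2) w n p))"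
  then show "M = distr (Om A1 w \<Otimes>\<^sub>M Om A2 w) seq_space (runA A1 A2 w)"
    using cylP_sumA[of A1 w A2] prob_space.prob_space_distr[OF prob_OO meas_runA]
    by (intro cylP_unique[of M "sumA A1 A2" w]) (auto simp: cylP_def)
qed



definition good :: "('a::finite) pwa \<Rightarrow> (nat \<Rightarrow> 'a) \<Rightarrow> (nat \<times> nat \<Rightarrow> nat) \<Rightarrow> bool" where
  "good B w \<omega> \<longleftrightarrow> (\<forall>j. \<omega> j \<in> set_pmf (K B w j))"

lemma AE_good: "AE \<omega> in Om B w. good B w \<omega>"
proof -
  interpret P: product_prob_space "\<lambda>iq. measure_pmf (K B w iq)" UNIV
    by unfold_locales
  have "\<forall>j. AE \<omega> in Om B w. \<omega> j \<in> set_pmf (K B w j)"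
  proof
    fix j
    show "AE \<omega> in Om B w. \<omega> j \<in> set_pmf (K B w j)"
      unfolding Om_def by (rule P.AE_component) (simp_all add: AE_measure_pmf)
  qed
  then show ?thesis unfolding good_def by (simp add: AE_all_countable)
qed

lemma run_in_states:
  assumes wf: "wf_pwa B" and g: "good B w \<omega>"
  shows "runf \<omega> i \<in> states B"
proof (induction i)
  case 0
  have "\<omega> (0,0) \<in> set_pmf (K B w (0,0))" using g unfolding good_def by blast
  then have "\<omega> (0,0) \<in> set_pmf (init B)" by (simp add: K_def)
  then show ?case using wf by (auto simp: wf_pwa_def)
next
  case (Suc i)
  have "\<omega> (Suc i, runf \<omega> i) \<in> set_pmf (trans B (runf \<omega> i) (w i))"
    using g unfolding good_def K_def by (metis case_prod_conv old.nat.simps(5))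
  then show ?case using wf Suc by (auto simp: wf_pwa_def)
qed

lemma finite_Vals: "wf_pwa B \<Longrightarrow> finite (Vals B)"
  unfolding Vals_def wf_pwa_def by (intro finite_imageI finite_SigmaI) auto

lemma Vals_mem: "q \<in> states B \<Longrightarrow> q' \<in> states B \<Longrightarrow> weight B q \<sigma> q' \<in> Vals B"
  unfolding Vals_def by (rule image_eqI[where x="(q,\<sigma>,q')"]) auto

lemma set_PLof: "wf_pwa A1 \<Longrightarrow> wf_pwa A2 \<Longrightarrow> set (PLof A1 A2) = Vals A1 \<times> Vals A2"
  unfolding PLof_def by (rule someI_ex) (intro finite_list finite_SigmaI finite_Vals)

lemma limsup_single:
  assumes wf: "wf_pwa B" and g: "good B w \<omega>"
  shows "\<exists>l\<in>Vals B. eventually (\<lambda>n. weight B (runf \<omega> n) (w n) (runf \<omega> (Suc n)) \<le> l) sequentially \<and>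
     frequently (\<lambda>n. weight B (runf \<omega> n) (w n) (runf \<omega> (Suc n)) = l) sequentially \<and>
     LimSup (wseq B w (runf \<omega>)) = ereal (of_rat l)"
proof -
  obtain l where l: "l \<in> Vals B" "eventually (\<lambda>n. weight B (runf \<omega> n) (w n) (runf \<omega> (Suc n)) \<le> l) sequentially"
     "frequently (\<lambda>n. weight B (runf \<omega> n) (w n) (runf \<omega> (Suc n)) = l) sequentially"
    using finite_vals_io[OF finite_Vals[OF wf], of "\<lambda>n. weight B (runf \<omega> n) (w n) (runf \<omega> (Suc n))"]
      Vals_mem run_in_states[OF wf g] by blast
  have "LimSup (wseq B w (runf \<omega>)) = ereal (of_rat l)"
  proof (rule LimSup_eq)
    show "eventually (\<lambda>n. wseq B w (runf \<omega>) n \<le> of_rat l) sequentially"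
      using l(2) by (rule eventually_mono) (simp add: wseq_def of_rat_less_eq)
    show "frequently (\<lambda>n. of_rat l \<le> wseq B w (runf \<omega>) n) sequentially"
      using l(3) by (rule frequently_elim1) (simp add: wseq_def)
  qed
  then show ?thesis using l by blast
qed

lemma limsup_sum:
  assumes wf1: "wf_pwa A1" and wf2: "wf_pwa A2" and g1: "good A1 w \<omega>1" and g2: "good A2 w \<omega>2"
  shows "LimSup (wseq (sumA A1 A2) w (runA A1 A2 w (\<omega>1, \<omega>2))) = LimSup (wseq A1 w (runf \<omega>1)) + LimSup (wseq A2 w (runf \<omega>2))"
proof -
  define R1 where "R1 = runf \<omega>1"
  define R2 where "R2 = runf \<omega>2"
  obtain la where la: "la \<in> Vals A1" "eventually (\<lambda>n. weight A1 (R1 n) (w n) (R1 (Suc n)) \<le> la) sequentially"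
     "frequently (\<lambda>n. weight A1 (R1 n) (w n) (R1 (Suc n)) = la) sequentially"
     "LimSup (wseq A1 w R1) = ereal (of_rat la)"
    using limsup_single[OF wf1 g1] unfolding R1_def by blast
  obtain lb where lb: "lb \<in> Vals A2" "eventually (\<lambda>n. weight A2 (R2 n) (w n) (R2 (Suc n)) \<le> lb) sequentially"
     "frequently (\<lambda>n. weight A2 (R2 n) (w n) (R2 (Suc n)) = lb) sequentially"
     "LimSup (wseq A2 w R2) = ereal (of_rat lb)"
    using limsup_single[OF wf2 g2] unfolding R2_def by blast
  define S where "S = stf A1 A2 w R1 R2"
  have S: "\<And>n. S (Suc n) = upd (PLof A1 A2) (m0of A1 A2) (S n) (weight A1 (R1 n) (w n) (R1 (Suc n))) (weight A2 (R2 n) (w n) (R2 (Suc n)))"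
    by (simp add: S_def)
  have mem: "(la, lb) \<in> set (PLof A1 A2)" using set_PLof[OF wf1 wf2] la(1) lb(1) by simp
  have m0: "m0of A1 A2 \<le> la + lb"
    unfolding m0of_def using la(1) lb(1) finite_Vals[OF wf1] finite_Vals[OF wf2]
    by (intro add_mono Min_le)
  have fa: "frequently (\<lambda>n. la \<le> weight A1 (R1 n) (w n) (R1 (Suc n))) sequentially"
    using la(3) by (rule frequently_elim1) simp
  have fb: "frequently (\<lambda>n. lb \<le> weight A2 (R2 n) (w n) (R2 (Suc n))) sequentially"
    using lb(3) by (rule frequently_elim1) simp
  note pw = pathwise[OF S la(2) fa lb(2) fb mem m0]
  have ws: "wseq (sumA A1 A2) w (runA A1 A2 w (\<omega>1, \<omega>2)) n = of_rat (snd (S (Suc n)))" for n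
    by (simp add: wseq_def runA_def jointf_def sumA_def S_def R1_def R2_def)
  have "LimSup (wseq (sumA A1 A2) w (runA A1 A2 w (\<omega>1, \<omega>2))) = ereal (of_rat (la + lb))"
  proof (rule LimSup_eq)
    show "eventually (\<lambda>n. wseq (sumA A1 A2) w (runA A1 A2 w (\<omega>1, \<omega>2)) n \<le> of_rat (la + lb)) sequentially"
      using pw by (auto simp: ws of_rat_less_eq elim: eventually_mono)
    show "frequently (\<lambda>n. of_rat (la + lb) \<le> wseq (sumA A1 A2) w (runA A1 A2 w (\<omega>1, \<omega>2)) n) sequentially"
      using pw by (auto simp: ws of_rat_less_eq elim: frequently_elim1)
  qed
  then show ?thesis using la(4) lb(4) by (simp add: R1_def R2_def of_rat_add)
qed

lemma wf_sumA:
  assumes wf1: "wf_pwa A1" and wf2: "wf_pwa A2"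
  shows "wf_pwa (sumA A1 A2)"
proof -
  have fFS: "finite (FSof A1 A2)"
  proof -
    have "{fl :: (bool \<times> bool) list. length fl = length (PLof A1 A2)} = {xs. set xs \<subseteq> UNIV \<and> length xs = length (PLof A1 A2)}"
      by simp
    then have "finite {fl :: (bool \<times> bool) list. length fl = length (PLof A1 A2)}"
      using finite_lists_length_eq[of "UNIV :: (bool \<times> bool) set"] by simp
    then show ?thesis unfolding FSof_def by (intro finite_SigmaI finite_insert[THEN iffD2] finite_imageI) simp_all
  qed
  have s0: "s0 A1 A2 \<in> FSof A1 A2" by (simp add: s0_def FSof_def)
  have upd_in: "upd (PLof A1 A2) (m0of A1 A2) f a b \<in> FSof A1 A2" for f a b
  proof -
    let ?X = "(\<lambda>k. fst (PLof A1 A2 ! k) + snd (PLof A1 A2 ! k)) ` {k. k < length (PLof A1 A2) \<and> done1 (PLof A1 A2 ! k) a b (fst f ! k)}"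
    have "Max (insert (m0of A1 A2) ?X) \<in> insert (m0of A1 A2) ?X" by (rule Max_in) auto
    moreover have "?X \<subseteq> (\<lambda>(x, y). x + y) ` set (PLof A1 A2)"
    proof
      fix z assume "z \<in> ?X"
      then obtain k where k: "k < length (PLof A1 A2)" "z = fst (PLof A1 A2 ! k) + snd (PLof A1 A2 ! k)" by blast
      then show "z \<in> (\<lambda>(x, y). x + y) ` set (PLof A1 A2)"
        by (intro image_eqI[where x="PLof A1 A2 ! k"]) (auto simp: case_prod_beta)
    qed
    ultimately show ?thesis by (auto simp: upd_def FSof_def)
  qed
  have i1: "set_pmf (init A1) \<subseteq> states A1" and i2: "set_pmf (init A2) \<subseteq> states A2"
    using wf1 wf2 by (auto simp: wf_pwa_def)
  have t1: "\<And>q \<sigma>. q \<in> states A1 \<Longrightarrow> set_pmf (trans A1 q \<sigma>) \<subseteq> states A1"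
    and t2: "\<And>q \<sigma>. q \<in> states A2 \<Longrightarrow> set_pmf (trans A2 q \<sigma>) \<subseteq> states A2"
    using wf1 wf2 by (auto simp: wf_pwa_def)
  show ?thesis
    unfolding wf_pwa_def
  proof (intro conjI ballI allI)
    show "finite (states (sumA A1 A2))"
      using wf1 wf2 fFS by (auto simp: sumA_def wf_pwa_def)
    show "set_pmf (init (sumA A1 A2)) \<subseteq> states (sumA A1 A2)"
      using i1 i2 s0 by (auto simp: sumA_def)
    fix s \<sigma> assume s: "s \<in> states (sumA A1 A2)"
    then obtain q1 q2 f where q: "q1 \<in> states A1" "q2 \<in> states A2" "f \<in> FSof A1 A2" "s = enc (q1, q2, f)"
      by (auto simp: sumA_def)
    show "set_pmf (trans (sumA A1 A2) s \<sigma>) \<subseteq> states (sumA A1 A2)"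
      using q t1[OF q(1), of \<sigma>] t2[OF q(2), of \<sigma>] by (auto simp: sumA_def intro!: imageI upd_in)
  qed
qed



lemma AE_pair_fst:
  assumes M1: "prob_space M1" and M2: "prob_space M2" and ae: "AE x in M1. P x"
  shows "AE \<omega> in M1 \<Otimes>\<^sub>M M2. P (fst \<omega>)"
proof -
  interpret P2: prob_space M2 by (rule M2)
  from ae obtain N where N: "{x \<in> space M1. \<not> P x} \<subseteq> N" "emeasure M1 N = 0" "N \<in> sets M1" by (rule AE_E)
  have "emeasure (M1 \<Otimes>\<^sub>M M2) (N \<times> space M2) = emeasure M1 N * emeasure M2 (space M2)"
    by (rule P2.emeasure_pair_measure_Times) (simp_all add: N)
  then have "N \<times> space M2 \<in> null_sets (M1 \<Otimes>\<^sub>M M2)"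
    using N by (simp add: null_sets_def)
  moreover have "{\<omega> \<in> space (M1 \<Otimes>\<^sub>M M2). \<not> P (fst \<omega>)} \<subseteq> N \<times> space M2"
    using N(1) by (auto simp: space_pair_measure)
  ultimately show ?thesis by (rule AE_I')
qed

lemma AE_pair_snd:
  assumes M1: "prob_space M1" and M2: "prob_space M2" and ae: "AE x in M2. P x"
  shows "AE \<omega> in M1 \<Otimes>\<^sub>M M2. P (snd \<omega>)"
proof -
  interpret P2: prob_space M2 by (rule M2)
  from ae obtain N where N: "{x \<in> space M2. \<not> P x} \<subseteq> N" "emeasure M2 N = 0" "N \<in> sets M2" by (rule AE_E)
  have "emeasure (M1 \<Otimes>\<^sub>M M2) (space M1 \<times> N) = emeasure M1 (space M1) * emeasure M2 N"
    by (rule P2.emeasure_pair_measure_Times) (simp_all add: N)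
  then have "space M1 \<times> N \<in> null_sets (M1 \<Otimes>\<^sub>M M2)"
    using N by (simp add: null_sets_def)
  moreover have "{\<omega> \<in> space (M1 \<Otimes>\<^sub>M M2). \<not> P (snd \<omega>)} \<subseteq> space M1 \<times> N"
    using N(1) by (auto simp: space_pair_measure)
  ultimately show ?thesis by (rule AE_I')
qed

definition supp :: "'b measure \<Rightarrow> ('b \<Rightarrow> ereal) \<Rightarrow> real set \<Rightarrow> real set" where
  "supp M X R = {r \<in> R. 0 < measure M {x \<in> space M. X x = ereal r}}"

lemma supp_props:
  assumes M: "prob_space M" and X: "X \<in> borel_measurable M" and R: "finite R"
    and ae: "AE x in M. X x \<in> ereal ` R"
  shows "AE x in M. X x \<in> ereal ` supp M X R" and "supp M X R \<noteq> {}" and "finite (supp M X R)"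
proof -
  interpret prob_space M by (rule M)
  have z: "AE x in M. X x \<noteq> ereal r" if "r \<in> R - supp M X R" for r
  proof -
    have s: "{x \<in> space M. X x = ereal r} \<in> sets M" using X by measurable
    have "measure M {x \<in> space M. X x = ereal r} = 0"
      using that measure_nonneg[of M "{x \<in> space M. X x = ereal r}"] by (auto simp: supp_def)
    then have "AE x in M. x \<notin> {x \<in> space M. X x = ereal r}" using prob_eq_0[OF s] by simp
    moreover have "AE x in M. x \<in> space M" by (rule AE_space)
    ultimately show ?thesis by eventually_elim auto
  qed
  have "AE x in M. \<forall>r\<in>R - supp M X R. X x \<noteq> ereal r"
    using R by (subst AE_finite_all) (auto intro: z)
  with ae show a: "AE x in M. X x \<in> ereal ` supp M X R"
    by (rule AE_mp[OF _ AE_mp[OF _ AE_I2]]) auto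
  show "supp M X R \<noteq> {}"
  proof
    assume "supp M X R = {}"
    with a have "AE x in M. False" by simp
    then show False using AE_False prob_space_axioms by (simp add: prob_space.AE_False)
  qed
  show "finite (supp M X R)" using R by (simp add: supp_def)
qed

lemma supp_pos:
  assumes M: "prob_space M" and X: "X \<in> borel_measurable M" and r: "r \<in> supp M X R"
  shows "0 < measure M {x \<in> space M. X x = ereal r}"
  using r by (simp add: supp_def)



lemma single_crit:
  assumes M: "prob_space M" and X[measurable]: "X \<in> borel_measurable M" and R: "finite R"
    and ae: "AE x in M. X x \<in> ereal ` R"
  shows "0 < measure M {x \<in> space M. ereal \<eta> \<le> X x} \<longleftrightarrow> (\<exists>r\<in>supp M X R. \<eta> \<le> r)"
    and "measure M {x \<in> space M. ereal \<eta> \<le> X x} = 1 \<longleftrightarrow> (\<forall>r\<in>supp M X R. \<eta> \<le> r)"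
proof -
  interpret prob_space M by (rule M)
  note sp = supp_props[OF M X R ae]
  have E: "{x \<in> space M. ereal \<eta> \<le> X x} \<in> sets M" by measurable
  have Er: "{x \<in> space M. X x = ereal r} \<in> sets M" for r by measurable
  show "0 < measure M {x \<in> space M. ereal \<eta> \<le> X x} \<longleftrightarrow> (\<exists>r\<in>supp M X R. \<eta> \<le> r)"
  proof
    assume pos: "0 < measure M {x \<in> space M. ereal \<eta> \<le> X x}"
    show "\<exists>r\<in>supp M X R. \<eta> \<le> r"
    proof (rule ccontr)
      assume "\<not> (\<exists>r\<in>supp M X R. \<eta> \<le> r)"
      then have lt: "\<forall>r\<in>supp M X R. r < \<eta>" by auto
      have "AE x in M. x \<notin> {x \<in> space M. ereal \<eta> \<le> X x}"
        using sp(1) by eventually_elim (use lt in auto)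
      then have "measure M {x \<in> space M. ereal \<eta> \<le> X x} = 0" using prob_eq_0[OF E] by simp
      then show False using pos by simp
    qed
  next
    assume "\<exists>r\<in>supp M X R. \<eta> \<le> r"
    then obtain r where r: "r \<in> supp M X R" "\<eta> \<le> r" by blast
    have "0 < measure M {x \<in> space M. X x = ereal r}" using r(1) by (simp add: supp_def)
    also have "\<dots> \<le> measure M {x \<in> space M. ereal \<eta> \<le> X x}"
      using r(2) by (intro finite_measure_mono E) auto
    finally show "0 < measure M {x \<in> space M. ereal \<eta> \<le> X x}" .
  qed
  show "measure M {x \<in> space M. ereal \<eta> \<le> X x} = 1 \<longleftrightarrow> (\<forall>r\<in>supp M X R. \<eta> \<le> r)"
  proof
    assume one: "measure M {x \<in> space M. ereal \<eta> \<le> X x} = 1"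
    show "\<forall>r\<in>supp M X R. \<eta> \<le> r"
    proof (rule ballI, rule ccontr)
      fix r assume r: "r \<in> supp M X R" "\<not> \<eta> \<le> r"
      have "AE x in M. x \<in> {x \<in> space M. ereal \<eta> \<le> X x}" using one prob_eq_1[OF E] by simp
      then have "AE x in M. x \<notin> {x \<in> space M. X x = ereal r}"
        by eventually_elim (use r(2) in auto)
      then have "measure M {x \<in> space M. X x = ereal r} = 0" using prob_eq_0[OF Er] by simp
      then show False using r(1) by (simp add: supp_def)
    qed
  next
    assume all: "\<forall>r\<in>supp M X R. \<eta> \<le> r"
    have "AE x in M. x \<in> {x \<in> space M. ereal \<eta> \<le> X x}"
      using sp(1) AE_space by eventually_elim (use all in auto)
    then show "measure M {x \<in> space M. ereal \<eta> \<le> X x} = 1" using prob_eq_1[OF E] by simp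
  qed
qed

lemma pair_crit:
  assumes M1: "prob_space M1" and X1[measurable]: "X1 \<in> borel_measurable M1" and R1: "finite R1"
    and ae1: "AE x in M1. X1 x \<in> ereal ` R1"
    and M2: "prob_space M2" and X2[measurable]: "X2 \<in> borel_measurable M2" and R2: "finite R2"
    and ae2: "AE x in M2. X2 x \<in> ereal ` R2"
  shows "0 < measure (M1 \<Otimes>\<^sub>M M2) {\<omega> \<in> space (M1 \<Otimes>\<^sub>M M2). ereal \<eta> \<le> X1 (fst \<omega>) + X2 (snd \<omega>)}
           \<longleftrightarrow> (\<exists>r1\<in>supp M1 X1 R1. \<exists>r2\<in>supp M2 X2 R2. \<eta> \<le> r1 + r2)"
    and "measure (M1 \<Otimes>\<^sub>M M2) {\<omega> \<in> space (M1 \<Otimes>\<^sub>M M2). ereal \<eta> \<le> X1 (fst \<omega>) + X2 (snd \<omega>)} = 1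
           \<longleftrightarrow> (\<forall>r1\<in>supp M1 X1 R1. \<forall>r2\<in>supp M2 X2 R2. \<eta> \<le> r1 + r2)"
proof -
  interpret P1: prob_space M1 by (rule M1)
  interpret P2: prob_space M2 by (rule M2)
  interpret P: prob_space "M1 \<Otimes>\<^sub>M M2" by (rule prob_space_pair[OF M1 M2])
  let ?E = "{\<omega> \<in> space (M1 \<Otimes>\<^sub>M M2). ereal \<eta> \<le> X1 (fst \<omega>) + X2 (snd \<omega>)}"
  let ?S1 = "supp M1 X1 R1" and ?S2 = "supp M2 X2 R2"
  have E: "?E \<in> sets (M1 \<Otimes>\<^sub>M M2)" by measurable
  have C1: "{x \<in> space M1. X1 x = ereal r} \<in> sets M1" for r by measurable
  have C2: "{x \<in> space M2. X2 x = ereal r} \<in> sets M2" for r by measurable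
  have ae: "AE \<omega> in M1 \<Otimes>\<^sub>M M2. X1 (fst \<omega>) \<in> ereal ` ?S1 \<and> X2 (snd \<omega>) \<in> ereal ` ?S2"
    using AE_pair_fst[OF M1 M2 supp_props(1)[OF M1 X1 R1 ae1]] AE_pair_snd[OF M1 M2 supp_props(1)[OF M2 X2 R2 ae2]]
    by eventually_elim auto
  have rect: "measure (M1 \<Otimes>\<^sub>M M2) ({x \<in> space M1. X1 x = ereal r1} \<times> {x \<in> space M2. X2 x = ereal r2})
      = measure M1 {x \<in> space M1. X1 x = ereal r1} * measure M2 {x \<in> space M2. X2 x = ereal r2}" for r1 r2
    by (simp add: measure_def P2.emeasure_pair_measure_Times[OF C1 C2] enn2real_mult)
  have rpos: "0 < measure (M1 \<Otimes>\<^sub>M M2) ({x \<in> space M1. X1 x = ereal r1} \<times> {x \<in> space M2. X2 x = ereal r2})"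
    if "r1 \<in> ?S1" "r2 \<in> ?S2" for r1 r2
    unfolding rect using that by (simp add: supp_def)
  have rsets: "{x \<in> space M1. X1 x = ereal r1} \<times> {x \<in> space M2. X2 x = ereal r2} \<in> sets (M1 \<Otimes>\<^sub>M M2)" for r1 r2
    using C1 C2 by (rule pair_measureI)
  show "0 < measure (M1 \<Otimes>\<^sub>M M2) ?E \<longleftrightarrow> (\<exists>r1\<in>?S1. \<exists>r2\<in>?S2. \<eta> \<le> r1 + r2)"
  proof
    assume pos: "0 < measure (M1 \<Otimes>\<^sub>M M2) ?E"
    show "\<exists>r1\<in>?S1. \<exists>r2\<in>?S2. \<eta> \<le> r1 + r2"
    proof (rule ccontr)
      assume "\<not> (\<exists>r1\<in>?S1. \<exists>r2\<in>?S2. \<eta> \<le> r1 + r2)"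
      then have lt: "\<forall>r1\<in>?S1. \<forall>r2\<in>?S2. r1 + r2 < \<eta>" by (auto simp: not_le)
      have "AE x in M1 \<Otimes>\<^sub>M M2. x \<notin> ?E"
        using ae by eventually_elim (use lt in \<open>fastforce simp: not_le[symmetric]\<close>)
      then have "measure (M1 \<Otimes>\<^sub>M M2) ?E = 0" using P.prob_eq_0[OF E] by simp
      then show False using pos by simp
    qed
  next
    assume "\<exists>r1\<in>?S1. \<exists>r2\<in>?S2. \<eta> \<le> r1 + r2"
    then obtain r1 r2 where r: "r1 \<in> ?S1" "r2 \<in> ?S2" "\<eta> \<le> r1 + r2" by blast
    have "0 < measure (M1 \<Otimes>\<^sub>M M2) ({x \<in> space M1. X1 x = ereal r1} \<times> {x \<in> space M2. X2 x = ereal r2})"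
      by (rule rpos[OF r(1,2)])
    also have "\<dots> \<le> measure (M1 \<Otimes>\<^sub>M M2) ?E"
      using r(3) by (intro P.finite_measure_mono E) (auto simp: space_pair_measure)
    finally show "0 < measure (M1 \<Otimes>\<^sub>M M2) ?E" .
  qed
  show "measure (M1 \<Otimes>\<^sub>M M2) ?E = 1 \<longleftrightarrow> (\<forall>r1\<in>?S1. \<forall>r2\<in>?S2. \<eta> \<le> r1 + r2)"
  proof
    assume one: "measure (M1 \<Otimes>\<^sub>M M2) ?E = 1"
    show "\<forall>r1\<in>?S1. \<forall>r2\<in>?S2. \<eta> \<le> r1 + r2"
    proof (intro ballI, rule ccontr)
      fix r1 r2 assume r: "r1 \<in> ?S1" "r2 \<in> ?S2" "\<not> \<eta> \<le> r1 + r2"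
      have "AE x in M1 \<Otimes>\<^sub>M M2. x \<in> ?E" using one P.prob_eq_1[OF E] by simp
      then have "AE x in M1 \<Otimes>\<^sub>M M2. x \<notin> {x \<in> space M1. X1 x = ereal r1} \<times> {x \<in> space M2. X2 x = ereal r2}"
        by eventually_elim (use r(3) in auto)
      then have "measure (M1 \<Otimes>\<^sub>M M2) ({x \<in> space M1. X1 x = ereal r1} \<times> {x \<in> space M2. X2 x = ereal r2}) = 0"
        using P.prob_eq_0[OF rsets] by simp
      then show False using rpos[OF r(1,2)] by simp
    qed
  next
    assume all: "\<forall>r1\<in>?S1. \<forall>r2\<in>?S2. \<eta> \<le> r1 + r2"
    have "AE x in M1 \<Otimes>\<^sub>M M2. x \<in> ?E"
      using ae AE_space by eventually_elim (use all in auto)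
    then show "measure (M1 \<Otimes>\<^sub>M M2) ?E = 1" using P.prob_eq_1[OF E] by simp
  qed
qed



lemma meas_comp_seq: "(\<lambda>r. r i) \<in> measurable seq_space (count_space UNIV)"
  unfolding seq_space_def by measurable

lemma meas_LimSup [measurable]: "(\<lambda>r. LimSup (wseq B w r)) \<in> borel_measurable seq_space"
proof -
  have "(\<lambda>r. ereal (wseq B w r i)) \<in> borel_measurable seq_space" for i
  proof -
    have "(\<lambda>r. (r i, r (Suc i))) \<in> measurable seq_space (count_space UNIV)"
      by (rule pair_cs[OF meas_comp_seq meas_comp_seq])
    then have "(\<lambda>r. (\<lambda>(a, b). ereal (of_rat (weight B a (w i) b))) (r i, r (Suc i))) \<in> borel_measurable seq_space"
      by (rule comp_cs) simp
    then show ?thesis by (simp add: wseq_def)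
  qed
  then show ?thesis unfolding LimSup_def by (rule borel_measurable_limsup)
qed

lemma ev_sets: "ev_ge B w \<eta> \<in> sets seq_space"
  unfolding ev_ge_def by measurable

definition XB :: "('a::finite) pwa \<Rightarrow> (nat \<Rightarrow> 'a) \<Rightarrow> (nat \<times> nat \<Rightarrow> nat) \<Rightarrow> ereal" where
  "XB B w \<omega> = LimSup (wseq B w (runf \<omega>))"

definition RB :: "('a::finite) pwa \<Rightarrow> real set" where
  "RB B = of_rat ` Vals B"

lemma measX [measurable]: "XB B w \<in> borel_measurable (Om B w)"
  unfolding XB_def by (rule measurable_compose[OF meas_runf meas_LimSup])

lemma finite_RB: "wf_pwa B \<Longrightarrow> finite (RB B)"
  unfolding RB_def by (intro finite_imageI finite_Vals)

lemma aeX: "wf_pwa B \<Longrightarrow> AE \<omega> in Om B w. XB B w \<omega> \<in> ereal ` RB B"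
  using AE_good[of B w]
proof (rule eventually_mono)
  fix \<omega> assume "wf_pwa B" "good B w \<omega>"
  then obtain l where "l \<in> Vals B" "LimSup (wseq B w (runf \<omega>)) = ereal (of_rat l)"
    using limsup_single by blast
  then show "XB B w \<omega> \<in> ereal ` RB B" by (auto simp: XB_def RB_def)
qed

lemma meas_ev: "measure (run_measure B w) (ev_ge B w \<eta>) = measure (Om B w) {\<omega> \<in> space (Om B w). ereal \<eta> \<le> XB B w \<omega>}"
proof -
  have "measure (run_measure B w) (ev_ge B w \<eta>) = measure (Om B w) (runf -` ev_ge B w \<eta> \<inter> space (Om B w))"
    unfolding run_measure_eq by (rule measure_distr[OF meas_runf ev_sets])
  also have "runf -` ev_ge B w \<eta> \<inter> space (Om B w) = {\<omega> \<in> space (Om B w). ereal \<eta> \<le> XB B w \<omega>}"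
    by (auto simp: ev_ge_def XB_def)
  finally show ?thesis .
qed

lemma meas_ev_sum:
  assumes wf1: "wf_pwa A1" and wf2: "wf_pwa A2"
  shows "measure (run_measure (sumA A1 A2) w) (ev_ge (sumA A1 A2) w \<eta>)
    = measure (Om A1 w \<Otimes>\<^sub>M Om A2 w) {\<omega> \<in> space (Om A1 w \<Otimes>\<^sub>M Om A2 w). ereal \<eta> \<le> XB A1 w (fst \<omega>) + XB A2 w (snd \<omega>)}"
proof -
  have "measure (run_measure (sumA A1 A2) w) (ev_ge (sumA A1 A2) w \<eta>)
      = measure (Om A1 w \<Otimes>\<^sub>M Om A2 w) (runA A1 A2 w -` ev_ge (sumA A1 A2) w \<eta> \<inter> space (Om A1 w \<Otimes>\<^sub>M Om A2 w))"
    unfolding run_measure_sumA by (rule measure_distr[OF meas_runA ev_sets])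
  also have "\<dots> = measure (Om A1 w \<Otimes>\<^sub>M Om A2 w) {\<omega> \<in> space (Om A1 w \<Otimes>\<^sub>M Om A2 w). ereal \<eta> \<le> XB A1 w (fst \<omega>) + XB A2 w (snd \<omega>)}"
  proof (rule measure_eq_AE)
    have ae: "AE \<omega> in Om A1 w \<Otimes>\<^sub>M Om A2 w. good A1 w (fst \<omega>) \<and> good A2 w (snd \<omega>)"
      using AE_pair_fst[OF prob_Om prob_Om AE_good] AE_pair_snd[OF prob_Om prob_Om AE_good]
      by eventually_elim auto
    then show "AE \<omega> in Om A1 w \<Otimes>\<^sub>M Om A2 w. (\<omega> \<in> runA A1 A2 w -` ev_ge (sumA A1 A2) w \<eta> \<inter> space (Om A1 w \<Otimes>\<^sub>M Om A2 w))
       \<longleftrightarrow> (\<omega> \<in> {\<omega> \<in> space (Om A1 w \<Otimes>\<^sub>M Om A2 w). ereal \<eta> \<le> XB A1 w (fst \<omega>) + XB A2 w (snd \<omega>)})"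
    proof eventually_elim
      fix \<omega> :: "(nat \<times> nat \<Rightarrow> nat) \<times> (nat \<times> nat \<Rightarrow> nat)"
      assume g: "good A1 w (fst \<omega>) \<and> good A2 w (snd \<omega>)"
      have "LimSup (wseq (sumA A1 A2) w (runA A1 A2 w (fst \<omega>, snd \<omega>))) = XB A1 w (fst \<omega>) + XB A2 w (snd \<omega>)"
        unfolding XB_def using g by (intro limsup_sum[OF wf1 wf2]) auto
      then show "(\<omega> \<in> runA A1 A2 w -` ev_ge (sumA A1 A2) w \<eta> \<inter> space (Om A1 w \<Otimes>\<^sub>M Om A2 w))
       \<longleftrightarrow> (\<omega> \<in> {\<omega> \<in> space (Om A1 w \<Otimes>\<^sub>M Om A2 w). ereal \<eta> \<le> XB A1 w (fst \<omega>) + XB A2 w (snd \<omega>)})"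
        by (auto simp: ev_ge_def)
    qed
    show "runA A1 A2 w -` ev_ge (sumA A1 A2) w \<eta> \<inter> space (Om A1 w \<Otimes>\<^sub>M Om A2 w) \<in> sets (Om A1 w \<Otimes>\<^sub>M Om A2 w)"
      by (rule measurable_sets[OF meas_runA ev_sets])
    show "{\<omega> \<in> space (Om A1 w \<Otimes>\<^sub>M Om A2 w). ereal \<eta> \<le> XB A1 w (fst \<omega>) + XB A2 w (snd \<omega>)} \<in> sets (Om A1 w \<Otimes>\<^sub>M Om A2 w)"
      by measurable
  qed
  finally show ?thesis .
qed

lemma set_ex1: "finite S \<Longrightarrow> S \<noteq> {} \<Longrightarrow> {\<eta>::real. \<exists>r\<in>S. \<eta> \<le> r} = {..Max S}"
proof (intro set_eqI iffI)
  fix \<eta> assume f: "finite S" "S \<noteq> {}"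
  { assume "\<eta> \<in> {\<eta>. \<exists>r\<in>S. \<eta> \<le> r}"
    then obtain r where "r \<in> S" "\<eta> \<le> r" by auto
    then show "\<eta> \<in> {..Max S}" using Max_ge[OF f(1)] by (auto intro: order.trans) }
  { assume "\<eta> \<in> {..Max S}"
    then show "\<eta> \<in> {\<eta>. \<exists>r\<in>S. \<eta> \<le> r}" using Max_in[OF f] by auto }
qed

lemma set_all1: "finite S \<Longrightarrow> S \<noteq> {} \<Longrightarrow> {\<eta>::real. \<forall>r\<in>S. \<eta> \<le> r} = {..Min S}"
proof (intro set_eqI iffI)
  fix \<eta> assume f: "finite S" "S \<noteq> {}"
  { assume "\<eta> \<in> {\<eta>. \<forall>r\<in>S. \<eta> \<le> r}"
    then show "\<eta> \<in> {..Min S}" using Min_in[OF f] by auto }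
  { assume "\<eta> \<in> {..Min S}"
    then show "\<eta> \<in> {\<eta>. \<forall>r\<in>S. \<eta> \<le> r}" using Min_le[OF f(1)] by (auto intro: order.trans) }
qed

lemma set_ex2: "finite S1 \<Longrightarrow> S1 \<noteq> {} \<Longrightarrow> finite S2 \<Longrightarrow> S2 \<noteq> {} \<Longrightarrow>
    {\<eta>::real. \<exists>r1\<in>S1. \<exists>r2\<in>S2. \<eta> \<le> r1 + r2} = {..Max S1 + Max S2}"
proof (intro set_eqI iffI)
  fix \<eta> assume f: "finite S1" "S1 \<noteq> {}" "finite S2" "S2 \<noteq> {}"
  { assume "\<eta> \<in> {\<eta>. \<exists>r1\<in>S1. \<exists>r2\<in>S2. \<eta> \<le> r1 + r2}"
    then obtain r1 r2 where r: "r1 \<in> S1" "r2 \<in> S2" "\<eta> \<le> r1 + r2" by auto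
    have "r1 + r2 \<le> Max S1 + Max S2" using Max_ge[OF f(1) r(1)] Max_ge[OF f(3) r(2)] by simp
    then show "\<eta> \<in> {..Max S1 + Max S2}" using r(3) by simp }
  { assume "\<eta> \<in> {..Max S1 + Max S2}"
    then show "\<eta> \<in> {\<eta>. \<exists>r1\<in>S1. \<exists>r2\<in>S2. \<eta> \<le> r1 + r2}" using Max_in[OF f(1,2)] Max_in[OF f(3,4)] by auto }
qed

lemma set_all2: "finite S1 \<Longrightarrow> S1 \<noteq> {} \<Longrightarrow> finite S2 \<Longrightarrow> S2 \<noteq> {} \<Longrightarrow>
    {\<eta>::real. \<forall>r1\<in>S1. \<forall>r2\<in>S2. \<eta> \<le> r1 + r2} = {..Min S1 + Min S2}"
proof (intro set_eqI iffI)
  fix \<eta> assume f: "finite S1" "S1 \<noteq> {}" "finite S2" "S2 \<noteq> {}"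
  { assume "\<eta> \<in> {\<eta>. \<forall>r1\<in>S1. \<forall>r2\<in>S2. \<eta> \<le> r1 + r2}"
    then show "\<eta> \<in> {..Min S1 + Min S2}" using Min_in[OF f(1,2)] Min_in[OF f(3,4)] by auto }
  { assume e: "\<eta> \<in> {..Min S1 + Min S2}"
    show "\<eta> \<in> {\<eta>. \<forall>r1\<in>S1. \<forall>r2\<in>S2. \<eta> \<le> r1 + r2}"
    proof (intro CollectI ballI)
      fix r1 r2 assume r: "r1 \<in> S1" "r2 \<in> S2"
      have "Min S1 + Min S2 \<le> r1 + r2" using Min_le[OF f(1) r(1)] Min_le[OF f(3) r(2)] by simp
      then show "\<eta> \<le> r1 + r2" using e by simp
    qed }
qed

theorem lemma24:
  fixes A1 A2 :: "('a::finite) pwa"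
  assumes "wf_pwa A1" and "wf_pwa A2"
  shows "(\<exists>A. wf_pwa A \<and> (\<forall>w. L_pos A w = L_pos A1 w + L_pos A2 w)) \<and>
         (\<exists>A. wf_pwa A \<and> (\<forall>w. L_as A w = L_as A1 w + L_as A2 w))"
proof -
  note wf1 = assms(1) and wf2 = assms(2)
  have main: "L_pos (sumA A1 A2) w = L_pos A1 w + L_pos A2 w \<and> L_as (sumA A1 A2) w = L_as A1 w + L_as A2 w" for w
  proof -
    define S1 where "S1 = supp (Om A1 w) (XB A1 w) (RB A1)"
    define S2 where "S2 = supp (Om A2 w) (XB A2 w) (RB A2)"
    note sp1 = supp_props[OF prob_Om measX finite_RB[OF wf1] aeX[OF wf1], folded S1_def]
    note sp2 = supp_props[OF prob_Om measX finite_RB[OF wf2] aeX[OF wf2], folded S2_def]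
    note c1 = single_crit[OF prob_Om measX finite_RB[OF wf1] aeX[OF wf1], folded S1_def]
    note c2 = single_crit[OF prob_Om measX finite_RB[OF wf2] aeX[OF wf2], folded S2_def]
    note cp = pair_crit[OF prob_Om measX finite_RB[OF wf1] aeX[OF wf1] prob_Om measX finite_RB[OF wf2] aeX[OF wf2],
        folded S1_def S2_def]
    have p1: "L_pos A1 w = Max S1"
      unfolding L_pos_def meas_ev c1 set_ex1[OF sp1(3) sp1(2)] by (simp add: S1_def)
    have p2: "L_pos A2 w = Max S2"
      unfolding L_pos_def meas_ev c2 set_ex1[OF sp2(3) sp2(2)] by (simp add: S1_def S2_def)
    have pA: "L_pos (sumA A1 A2) w = Max S1 + Max S2"
      unfolding L_pos_def meas_ev_sum[OF wf1 wf2] cp set_ex2[OF sp1(3) sp1(2) sp2(3) sp2(2)] by (simp add: S1_def S2_def)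
    have a1: "L_as A1 w = Min S1"
      unfolding L_as_def meas_ev c1 set_all1[OF sp1(3) sp1(2)] by (simp add: S1_def)
    have a2: "L_as A2 w = Min S2"
      unfolding L_as_def meas_ev c2 set_all1[OF sp2(3) sp2(2)] by (simp add: S1_def S2_def)
    have aA: "L_as (sumA A1 A2) w = Min S1 + Min S2"
      unfolding L_as_def meas_ev_sum[OF wf1 wf2] cp set_all2[OF sp1(3) sp1(2) sp2(3) sp2(2)] by (simp add: S1_def S2_def)
    show ?thesis using p1 p2 pA a1 a2 aA by simp
  qed
  show ?thesis
    using wf_sumA[OF wf1 wf2] main by blast
qed

end
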